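(* Let $R$ be a cubiculated region. The tiling space $\mathcal{T}_R$ is flip connected if and only if $I_{R_{tiling}}\subseteq I_{R_{flip}}$.
   Context: A cubiculated region $R$ is a homogeneous cubical complex of dimension $n$ embedded in $\mathbb{R}^N$ ($n\le N$), a union of elementary $n$-cubes. A domino is two elementary $n$-cubes of $R$ sharing an $(n-1)$-face; $\mathcal{D}_R$ is the set of dominoes. A domino tiling $T\subseteq\mathcal{D}_R$ covers every elementary cube exactly once; $\mathcal{T}_R$ is the set of tilings. $G_R$ is the graph with a vertex per elementary cube and an edge between cubes sharing an $(n-1)$-face; dominoes are edges of $G_R$. A move $M=(D_1,D_2)$ (with $D_1,D_2\subseteq\mathcal{D}_R$) takes a tiling $T_1$ to $T_1+M=(T_1\setminus D_1)\cup D_2$. A local flip is a move that replaces two adjacent parallel dominoes (sharing two $(n-1)$-faces) by the two adjacent parallel dominoes covering the same four cubes in the perpendicular direction; equivalently $D_1\cup D_2$ is a $4$-cycle of $G_R$ with $D_1,D_2$ its two pairs of opposite edges. $\mathcal{M}_{flip}$ is the set of all local flips. $\mathcal{T}_R$ is flip connected if for all $T_1,T_2\in\mathcal{T}_R$ there are $M_1,\dots,M_r\in\mathcal{M}_{flip}$ with $T_2=T_1+M_1+\dots+M_r$ and $T_1+M_1+\dots+M_s\in\mathcal{T}_R$ for all $1\le s\le r$. In the polynomial ring $\mathbb{K}[y_e: e\in E(G_R)]$ write $y^{E_0}=\prod_{e\in E_0}y_e$ for $E_0\subseteq E(G_R)$. The flip ideal is $I_{R_{flip}}=\langle y^{D_1}-y^{D_2}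 : (D_1,D_2)\in\mathcal{M}_{flip}\rangle$ and the tiling ideal is $I_{R_{tiling}}=\langle y^{T_1}-y^{T_2} : T_1,T_2\in\mathcal{T}_R\rangle$. *)

theory Defs
  imports Complex_Main "HOL-Library.Poly_Mapping"
begin

text \<open>An elementary cube in R^N, where N = CARD('n): a corner a in Z^N and the set S of
  non-degenerate coordinate directions. Its dimension is card S.\<close>
type_synonym 'n cube = "('n \<Rightarrow> int) \<times> 'n set"

definition cube_set :: "'n cube \<Rightarrow> ('n \<Rightarrow> real) set" where
  "cube_set c = {x. \<forall>i. if i \<in> snd c then real_of_int (fst c i) \<le> x i \<and> x i \<le> real_of_int (fst c i) + 1
                              else x i = real_of_int (fst c i)}"

definition elem_cube :: "nat \<Rightarrow> 'n cube \<Rightarrow> bool" where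
  "elem_cube k c \<longleftrightarrow> card (snd c) = k"

definition cubiculated_region :: "nat \<Rightarrow> ('n::finite) cube set \<Rightarrow> bool" where
  "cubiculated_region n R \<longleftrightarrow> finite R \<and> (\<forall>c\<in>R. elem_cube n c)"

definition region_set :: "'n cube set \<Rightarrow> ('n \<Rightarrow> real) set" where
  "region_set R = (\<Union>c\<in>R. cube_set c)"

definition share_face :: "nat \<Rightarrow> 'n cube \<Rightarrow> 'n cube \<Rightarrow> bool" where
  "share_face n c1 c2 \<longleftrightarrow> c1 \<noteq> c2 \<and>
     (\<exists>f. elem_cube (n - 1) f \<and> cube_set c1 \<inter> cube_set c2 = cube_set f)"

text \<open>Edges of G_R = dominoes of R (unordered pairs of cubes).\<close>
definition dominoes :: "nat \<Rightarrow> 'n cube set \<Rightarrow> 'n cube set set" where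
  "dominoes n R = {{c1, c2} | c1 c2. c1 \<in> R \<and> c2 \<in> R \<and> share_face n c1 c2}"

definition tilings :: "nat \<Rightarrow> 'n cube set \<Rightarrow> 'n cube set set set" where
  "tilings n R = {T. T \<subseteq> dominoes n R \<and> (\<forall>c\<in>R. \<exists>!d. d \<in> T \<and> c \<in> d)}"

type_synonym 'n move = "'n cube set set \<times> 'n cube set set"

definition apply_move :: "'n cube set set \<Rightarrow> 'n move \<Rightarrow> 'n cube set set" where
  "apply_move T M = (T - fst M) \<union> snd M"

definition apply_moves :: "'n cube set set \<Rightarrow> 'n move list \<Rightarrow> 'n cube set set" where
  "apply_moves T Ms = foldl apply_move T Ms"

text \<open>Local flips: D1 \<union> D2 is a 4-cycle a-b-c-d-a of G_R, D1 and D2 its pairs of opposite edges.\<close>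
definition flips :: "nat \<Rightarrow> 'n cube set \<Rightarrow> 'n move set" where
  "flips n R = {({{a, b}, {c, d}}, {{b, c}, {d, a}}) | a b c d.
      a \<in> R \<and> b \<in> R \<and> c \<in> R \<and> d \<in> R \<and> distinct [a, b, c, d] \<and>
      {a, b} \<in> dominoes n R \<and> {b, c} \<in> dominoes n R \<and>
      {c, d} \<in> dominoes n R \<and> {d, a} \<in> dominoes n R}"

definition flip_connected :: "nat \<Rightarrow> 'n cube set \<Rightarrow> bool" where
  "flip_connected n R \<longleftrightarrow>
     (\<forall>T1 \<in> tilings n R. \<forall>T2 \<in> tilings n R. \<exists>Ms.
        set Ms \<subseteq> flips n R \<and> apply_moves T1 Ms = T2 \<and>
        (\<forall>s. 1 \<le> s \<and> s \<le> length Ms \<longrightarrow> apply_moves T1 (take s Ms) \<in> tilings n R))"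

text \<open>Polynomials over 'k in variables indexed by (sets of cubes); the ring K[y_e : e \<in> E(G_R)]
  is the subring of polynomials only involving variables y_e with e a domino.\<close>
type_synonym ('n, 'k) dpoly = "('n cube set \<Rightarrow>\<^sub>0 nat) \<Rightarrow>\<^sub>0 'k"

definition poly_ring :: "nat \<Rightarrow> 'n cube set \<Rightarrow> ('n, 'k::field) dpoly set" where
  "poly_ring n R = {p. \<forall>m \<in> Poly_Mapping.keys p. Poly_Mapping.keys m \<subseteq> dominoes n R}"

text \<open>y^{E0} = product of the variables y_e, e \<in> E0.\<close>
definition ymon :: "'n cube set set \<Rightarrow> ('n, 'k::field) dpoly" where
  "ymon E0 = Poly_Mapping.single (\<Sum>e\<in>E0. Poly_Mapping.single e 1) 1"

definition gen_ideal :: "('a::comm_ring_1) set \<Rightarrow> 'a set \<Rightarrow> 'a set" where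
  "gen_ideal P G = {p. \<exists>F r. finite F \<and> F \<subseteq> G \<and> (\<forall>g\<in>F. r g \<in> P) \<and> p = (\<Sum>g\<in>F. r g * g)}"

definition flip_ideal :: "nat \<Rightarrow> 'n cube set \<Rightarrow> ('n, 'k::field) dpoly set" where
  "flip_ideal n R = gen_ideal (poly_ring n R)
      {ymon (fst M) - ymon (snd M) | M. M \<in> flips n R}"

definition tiling_ideal :: "nat \<Rightarrow> 'n cube set \<Rightarrow> ('n, 'k::field) dpoly set" where
  "tiling_ideal n R = gen_ideal (poly_ring n R)
      {ymon T1 - ymon T2 | T1 T2. T1 \<in> tilings n R \<and> T2 \<in> tilings n R}"

end

theory Submission
  imports Defs
begin

definition expo :: "'v set \<Rightarrow> 'v \<Rightarrow>\<^sub>0 nat" where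
  "expo E = (\<Sum>e\<in>E. Poly_Mapping.single e 1)"

lemma ymon_expo: "ymon E = Poly_Mapping.single (expo E) 1"
  by (simp add: ymon_def expo_def)

lemma lookup_expo: "finite E \<Longrightarrow> Poly_Mapping.lookup (expo E) e = (if e \<in> E then 1 else 0)"
  by (simp add: expo_def lookup_sum lookup_single when_def)

lemma keys_expo: "finite E \<Longrightarrow> Poly_Mapping.keys (expo E) = E"
  by (auto simp: in_keys_iff lookup_expo split: if_splits)

lemma expo_inj: "finite X \<Longrightarrow> finite Y \<Longrightarrow> expo X = expo Y \<Longrightarrow> X = Y"
proof -
  assume a: "finite X" "finite Y" "expo X = expo Y"
  have "Poly_Mapping.keys (expo X) = Poly_Mapping.keys (expo Y)" using a(3) by simp
  thus ?thesis using keys_expo[OF a(1)] keys_expo[OF a(2)] by simp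
qed

lemma expo_union: "finite X \<Longrightarrow> finite Y \<Longrightarrow> X \<inter> Y = {} \<Longrightarrow> expo (X \<union> Y) = expo X + expo Y"
  by (simp add: expo_def sum.union_disjoint)

lemma ymon_union: "finite X \<Longrightarrow> finite Y \<Longrightarrow> X \<inter> Y = {} \<Longrightarrow>
   (ymon (X \<union> Y) :: ('n, 'k::field) dpoly) = ymon X * ymon Y"
  by (simp add: ymon_expo expo_union mult_single)

section \<open>generated ideals\<close>

lemma gi_zero: "0 \<in> gen_ideal P G"
  unfolding gen_ideal_def by (rule CollectI, rule exI[of _ "{}"]) auto

lemma gi_gen: "g \<in> G \<Longrightarrow> r \<in> P \<Longrightarrow> r * g \<in> gen_ideal P G"
  unfolding gen_ideal_def
  by (rule CollectI, rule exI[of _ "{g}"], rule exI[of _ "\<lambda>_. r"]) auto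

lemma gi_add:
  assumes Padd: "\<And>x y. x \<in> P \<Longrightarrow> y \<in> P \<Longrightarrow> x + y \<in> P" and P0: "0 \<in> P"
    and p: "p \<in> gen_ideal P G" and q: "q \<in> gen_ideal P G"
  shows "p + q \<in> gen_ideal P G"
proof -
  obtain F1 r1 where F1: "finite F1" "F1 \<subseteq> G" "\<forall>g\<in>F1. r1 g \<in> P" "p = (\<Sum>g\<in>F1. r1 g * g)"
    using p unfolding gen_ideal_def by blast
  obtain F2 r2 where F2: "finite F2" "F2 \<subseteq> G" "\<forall>g\<in>F2. r2 g \<in> P" "q = (\<Sum>g\<in>F2. r2 g * g)"
    using q unfolding gen_ideal_def by blast
  have e1: "(\<Sum>g\<in>F1\<union>F2. (if g\<in>F1 then r1 g else 0) * g) = p"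
    unfolding F1(4) by (rule sum.mono_neutral_cong_right) (use F1 F2 in auto)
  have e2: "(\<Sum>g\<in>F1\<union>F2. (if g\<in>F2 then r2 g else 0) * g) = q"
    unfolding F2(4) by (rule sum.mono_neutral_cong_right) (use F1 F2 in auto)
  have "p + q = (\<Sum>g\<in>F1\<union>F2. ((if g\<in>F1 then r1 g else 0) + (if g\<in>F2 then r2 g else 0)) * g)"
    unfolding e1[symmetric] e2[symmetric] sum.distrib[symmetric] distrib_right ..
  moreover have "\<forall>g\<in>F1\<union>F2. (if g\<in>F1 then r1 g else 0) + (if g\<in>F2 then r2 g else 0) \<in> P"
    using F1 F2 Padd P0 by auto
  ultimately show ?thesis unfolding gen_ideal_def using F1 F2
    by (intro CollectI exI[of _ "F1 \<union> F2"] exI[of _ "\<lambda>g. (if g\<in>F1 then r1 g else 0) + (if g\<in>F2 then r2 g else 0)"]) auto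
qed

lemma gi_mult:
  assumes Pmul: "\<And>x y. x \<in> P \<Longrightarrow> y \<in> P \<Longrightarrow> x * y \<in> P"
    and x: "x \<in> P" and q: "q \<in> gen_ideal P G"
  shows "x * q \<in> gen_ideal P G"
proof -
  obtain F r where F: "finite F" "F \<subseteq> G" "\<forall>g\<in>F. r g \<in> P" "q = (\<Sum>g\<in>F. r g * g)"
    using q unfolding gen_ideal_def by blast
  have "x * q = (\<Sum>g\<in>F. (x * r g) * g)" unfolding F(4) sum_distrib_left by (simp add: mult.assoc)
  then show ?thesis unfolding gen_ideal_def using F Pmul x
    by (intro CollectI exI[of _ F] exI[of _ "\<lambda>g. x * r g"]) auto
qed

lemma gi_sum:
  assumes Padd: "\<And>x y. x \<in> P \<Longrightarrow> y \<in> P \<Longrightarrow> x + y \<in> P" and P0: "0 \<in> P"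
  shows "finite F \<Longrightarrow> (\<And>g. g \<in> F \<Longrightarrow> f g \<in> gen_ideal P G) \<Longrightarrow> sum f F \<in> gen_ideal P G"
  by (induction F rule: finite_induct) (auto intro: gi_zero gi_add[OF Padd P0])

lemma gi_subset:
  assumes Padd: "\<And>x y. x \<in> P \<Longrightarrow> y \<in> P \<Longrightarrow> x + y \<in> P" and P0: "0 \<in> P"
    and Pmul: "\<And>x y. x \<in> P \<Longrightarrow> y \<in> P \<Longrightarrow> x * y \<in> P"
    and G: "G \<subseteq> gen_ideal P H"
  shows "gen_ideal P G \<subseteq> gen_ideal P H"
proof
  fix p assume "p \<in> gen_ideal P G"
  then obtain F r where F: "finite F" "F \<subseteq> G" "\<forall>g\<in>F. r g \<in> P" "p = (\<Sum>g\<in>F. r g * g)"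
    unfolding gen_ideal_def by blast
  show "p \<in> gen_ideal P H" unfolding F(4)
    by (rule gi_sum[OF Padd P0 F(1)]) (use F G in \<open>auto intro: gi_mult[OF Pmul]\<close>)
qed

lemma pr_add: "x \<in> poly_ring n R \<Longrightarrow> y \<in> poly_ring n R \<Longrightarrow> x + y \<in> poly_ring n R"
proof -
  assume x: "x \<in> poly_ring n R" and y: "y \<in> poly_ring n R"
  show ?thesis unfolding poly_ring_def
  proof (intro CollectI ballI)
    fix m assume "m \<in> Poly_Mapping.keys (x + y)"
    then have "m \<in> Poly_Mapping.keys x \<union> Poly_Mapping.keys y" using keys_add[of x y] by (rule subsetD[rotated])
    then show "Poly_Mapping.keys m \<subseteq> dominoes n R" using x y unfolding poly_ring_def by auto
  qed
qed
lemma pr_zero: "0 \<in> poly_ring n R"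
  unfolding poly_ring_def by simp

lemma pr_one: "1 \<in> poly_ring n R"
  unfolding poly_ring_def by simp

lemma pr_mult: "x \<in> poly_ring n R \<Longrightarrow> y \<in> poly_ring n R \<Longrightarrow> x * y \<in> poly_ring n R"
proof -
  assume x: "x \<in> poly_ring n R" and y: "y \<in> poly_ring n R"
  show ?thesis unfolding poly_ring_def
  proof (intro CollectI ballI)
    fix m assume "m \<in> Poly_Mapping.keys (x * y)"
    then have "m \<in> {a + b | a b. a \<in> Poly_Mapping.keys x \<and> b \<in> Poly_Mapping.keys y}"
      using keys_mult[of x y] by (rule subsetD[rotated])
    then obtain a b where ab: "m = a + b" "a \<in> Poly_Mapping.keys x" "b \<in> Poly_Mapping.keys y"
      by blast
    have "Poly_Mapping.keys m \<subseteq> Poly_Mapping.keys a \<union> Poly_Mapping.keys b"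
      unfolding ab(1) by (rule keys_add)
    moreover have "Poly_Mapping.keys a \<subseteq> dominoes n R" "Poly_Mapping.keys b \<subseteq> dominoes n R"
      using x y ab unfolding poly_ring_def by auto
    ultimately show "Poly_Mapping.keys m \<subseteq> dominoes n R" by blast
  qed
qed

lemma pr_ymon: "finite E \<Longrightarrow> E \<subseteq> dominoes n R \<Longrightarrow> ymon E \<in> poly_ring n R"
  unfolding poly_ring_def by (simp add: ymon_expo keys_expo)

definition phi :: "'m set \<Rightarrow> ('m \<Rightarrow>\<^sub>0 'k::field) \<Rightarrow> 'k" where
  "phi C p = sum (Poly_Mapping.lookup p) (Poly_Mapping.keys p \<inter> C)"

lemma phi_alt: "finite S \<Longrightarrow> Poly_Mapping.keys p \<subseteq> S \<Longrightarrow> phi C p = sum (Poly_Mapping.lookup p) (S \<inter> C)"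
  unfolding phi_def by (rule sum.mono_neutral_left) (auto simp: in_keys_iff)

lemma phi_add: "phi C (p + q) = phi C p + phi C q"
proof -
  let ?S = "Poly_Mapping.keys p \<union> Poly_Mapping.keys q"
  have "phi C (p + q) = sum (Poly_Mapping.lookup (p+q)) (?S \<inter> C)"
    by (rule phi_alt) (simp, rule keys_add)
  also have "\<dots> = sum (Poly_Mapping.lookup p) (?S \<inter> C) + sum (Poly_Mapping.lookup q) (?S \<inter> C)"
    by (simp add: lookup_add sum.distrib)
  also have "\<dots> = phi C p + phi C q"
    by (subst (1 2) phi_alt[where S = ?S]) auto
  finally show ?thesis .
qed

lemma phi_zero: "phi C 0 = 0"
  by (simp add: phi_def)

lemma phi_diff: "phi C (p - q) = phi C p - phi C q"
  by (metis add_diff_cancel diff_add_cancel phi_add)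

lemma phi_single: "phi C (Poly_Mapping.single u c) = (if u \<in> C then c else 0)"
  by (auto simp: phi_def)

lemma phi_sum: "finite F \<Longrightarrow> phi C (sum f F) = (\<Sum>g\<in>F. phi C (f g))"
  by (induction F rule: finite_induct) (auto simp: phi_zero phi_add)

lemma update_single: "a \<notin> Poly_Mapping.keys f \<Longrightarrow> Poly_Mapping.update a b f = f + Poly_Mapping.single a b"
  by (rule poly_mapping_eqI) (auto simp: lookup_update lookup_add lookup_single in_keys_iff when_def)

lemma phi_binom:
  assumes "\<And>u. u + a \<in> C \<longleftrightarrow> u + b \<in> C"
  shows "phi C (r * (Poly_Mapping.single a 1 - Poly_Mapping.single b (1::'k::field))) = 0"
proof (induction r rule: update_induct)
  case const
  then show ?case by (simp add: phi_zero)
next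
  case (update f x c)
  then show ?case
    by (simp add: update_single distrib_right phi_add right_diff_distrib mult_single phi_diff phi_single assms)
qed


definition fl :: "nat \<Rightarrow> 'n cube set \<Rightarrow> 'n cube \<Rightarrow> 'n cube \<Rightarrow> 'n cube \<Rightarrow> 'n cube \<Rightarrow> bool" where
  "fl n R a b c d \<longleftrightarrow> a \<in> R \<and> b \<in> R \<and> c \<in> R \<and> d \<in> R \<and> distinct [a, b, c, d] \<and>
      {a, b} \<in> dominoes n R \<and> {b, c} \<in> dominoes n R \<and>
      {c, d} \<in> dominoes n R \<and> {d, a} \<in> dominoes n R"

lemma flipsE:
  assumes "M \<in> flips n R"
  obtains a b c d where "fl n R a b c d" "M = ({{a, b}, {c, d}}, {{b, c}, {d, a}})"
  using assms unfolding flips_def fl_def by blast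

lemma flipsI: "fl n R a b c d \<Longrightarrow> ({{a, b}, {c, d}}, {{b, c}, {d, a}}) \<in> flips n R"
  unfolding flips_def fl_def by blast

lemma fl_rot: "fl n R a b c d \<Longrightarrow> fl n R b c d a"
  unfolding fl_def by (auto simp: insert_commute)

lemma fl_rot2: "fl n R a b c d \<Longrightarrow> fl n R c d a b"
  using fl_rot by blast

lemma dominoes_sub: "d \<in> dominoes n R \<Longrightarrow> d \<subseteq> R"
  unfolding dominoes_def by auto

lemma finite_dominoes: "finite R \<Longrightarrow> finite (dominoes n R)"
  by (rule finite_subset[of _ "Pow R"]) (auto dest: dominoes_sub)

lemma tiling_sub: "T \<in> tilings n R \<Longrightarrow> T \<subseteq> dominoes n R"
  unfolding tilings_def by auto

lemma tiling_finite: "finite R \<Longrightarrow> T \<in> tilings n R \<Longrightarrow> finite T"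
  using finite_dominoes tiling_sub finite_subset by metis

lemma tiling_uniq: "T \<in> tilings n R \<Longrightarrow> d \<in> T \<Longrightarrow> d' \<in> T \<Longrightarrow> x \<in> d \<Longrightarrow> x \<in> d' \<Longrightarrow> d = d'"
  unfolding tilings_def using dominoes_sub by blast

lemma tiling_cover: "T \<in> tilings n R \<Longrightarrow> x \<in> R \<Longrightarrow> \<exists>d\<in>T. x \<in> d"
  unfolding tilings_def by blast

lemma tilingI: "T \<subseteq> dominoes n R \<Longrightarrow> (\<And>x. x \<in> R \<Longrightarrow> \<exists>d\<in>T. x \<in> d) \<Longrightarrow>
   (\<And>x d d'. x \<in> R \<Longrightarrow> d \<in> T \<Longrightarrow> d' \<in> T \<Longrightarrow> x \<in> d \<Longrightarrow> x \<in> d' \<Longrightarrow> d = d') \<Longrightarrow> T \<in> tilings n R"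
proof -
  assume 1: "T \<subseteq> dominoes n R" and 2: "\<And>x. x \<in> R \<Longrightarrow> \<exists>d\<in>T. x \<in> d"
    and 3: "\<And>x d d'. x \<in> R \<Longrightarrow> d \<in> T \<Longrightarrow> d' \<in> T \<Longrightarrow> x \<in> d \<Longrightarrow> x \<in> d' \<Longrightarrow> d = d'"
  show ?thesis unfolding tilings_def
  proof (intro CollectI conjI ballI 1)
    fix x assume x: "x \<in> R"
    then obtain d where d: "d \<in> T" "x \<in> d" using 2 by blast
    show "\<exists>!d. d \<in> T \<and> x \<in> d"
    proof (rule ex1I[of _ d])
      show "d \<in> T \<and> x \<in> d" using d by simp
    next
      fix d' assume "d' \<in> T \<and> x \<in> d'"
      then show "d' = d" using 3[OF x _ d(1) _ d(2)] by simp
    qed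
  qed
qed

lemma flip_forward:
  assumes T: "T \<in> tilings n R" and f: "fl n R a b c d"
    and ab: "{a, b} \<in> T" and cd: "{c, d} \<in> T"
  shows "(T - {{a, b}, {c, d}}) \<union> {{b, c}, {d, a}} \<in> tilings n R"
    and "(T - {{a, b}, {c, d}}) \<inter> {{b, c}, {d, a}} = {}"
proof -
  have dist: "a \<noteq> b" "a \<noteq> c" "a \<noteq> d" "b \<noteq> c" "b \<noteq> d" "c \<noteq> d" using f by (auto simp: fl_def)
  have bc: "{b, c} \<notin> T - {{a, b}, {c, d}}"
  proof
    assume "{b, c} \<in> T - {{a, b}, {c, d}}"
    then have "{b,c} = {a,b}" using tiling_uniq[OF T _ ab, of "{b,c}" b] by auto
    then show False using dist by (auto simp: doubleton_eq_iff)
  qed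
  have da: "{d, a} \<notin> T - {{a, b}, {c, d}}"
  proof
    assume "{d, a} \<in> T - {{a, b}, {c, d}}"
    then have "{d,a} = {a,b}" using tiling_uniq[OF T _ ab, of "{d,a}" a] by auto
    then show False using dist by (auto simp: doubleton_eq_iff)
  qed
  show "(T - {{a, b}, {c, d}}) \<inter> {{b, c}, {d, a}} = {}" using bc da by auto
  show "(T - {{a, b}, {c, d}}) \<union> {{b, c}, {d, a}} \<in> tilings n R"
  proof (rule tilingI)
    show "T - {{a, b}, {c, d}} \<union> {{b, c}, {d, a}} \<subseteq> dominoes n R"
      using tiling_sub[OF T] f by (auto simp: fl_def)
  next
    fix x assume x: "x \<in> R"
    show "\<exists>e\<in>T - {{a, b}, {c, d}} \<union> {{b, c}, {d, a}}. x \<in> e"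
    proof (cases "x \<in> {a,b,c,d}")
      case True then show ?thesis by auto
    next
      case False
      obtain e where "e \<in> T" "x \<in> e" using tiling_cover[OF T x] by blast
      then show ?thesis using False by auto
    qed
  next
    fix x e e' assume x: "x \<in> R" and e: "e \<in> T - {{a, b}, {c, d}} \<union> {{b, c}, {d, a}}"
      and e': "e' \<in> T - {{a, b}, {c, d}} \<union> {{b, c}, {d, a}}" and xe: "x \<in> e" "x \<in> e'"
    have key: "e = e'" if e: "e \<in> T - {{a, b}, {c, d}} \<union> {{b, c}, {d, a}}"
      and e': "e' \<in> T - {{a, b}, {c, d}} \<union> {{b, c}, {d, a}}" and xe: "x \<in> e" "x \<in> e'"
      and ee': "e \<in> {{b, c}, {d, a}}" for e e'
    proof (cases "e' \<in> {{b, c}, {d, a}}")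
      case True
      then show ?thesis using ee' xe dist by auto
    next
      case False
      then have e'T: "e' \<in> T" "e' \<noteq> {a,b}" "e' \<noteq> {c,d}" using e' by auto
      from ee' xe have "x \<in> {a,b} \<or> x \<in> {c,d}" by auto
      then show ?thesis
      proof
        assume "x \<in> {a,b}" then have "e' = {a,b}" using tiling_uniq[OF T e'T(1) ab xe(2)] by auto
        then show ?thesis using e'T by auto
      next
        assume "x \<in> {c,d}" then have "e' = {c,d}" using tiling_uniq[OF T e'T(1) cd xe(2)] by auto
        then show ?thesis using e'T by auto
      qed
    qed
    show "e = e'"
    proof (cases "e \<in> {{b, c}, {d, a}}")
      case True then show ?thesis using key[OF e e' xe True] by simp
    next
      case False note F = False
      show ?thesis
      proof (cases "e' \<in> {{b, c}, {d, a}}")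
        case True then show ?thesis using key[OF e' e xe(2,1) True] by simp
      next
        case False
        then have "e \<in> T" "e' \<in> T" using F e e' by auto
        then show ?thesis by (rule tiling_uniq[OF T _ _ xe])
      qed
    qed
  qed
qed

lemma flip_noop:
  assumes T: "T \<in> tilings n R" and f: "fl n R a b c d"
    and T': "(T - {{a, b}, {c, d}}) \<union> {{b, c}, {d, a}} \<in> tilings n R"
    and ab: "{a, b} \<notin> T"
  shows "(T - {{a, b}, {c, d}}) \<union> {{b, c}, {d, a}} = T"
proof -
  have dist: "a \<noteq> b" "a \<noteq> c" "a \<noteq> d" "b \<noteq> c" "b \<noteq> d" "c \<noteq> d" and R: "a \<in> R" "b \<in> R"
    using f by (auto simp: fl_def)
  obtain e where e: "e \<in> T" "a \<in> e" using tiling_cover[OF T R(1)] by blast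
  have "e \<noteq> {c,d}" using e dist by auto
  then have "e \<in> (T - {{a, b}, {c, d}}) \<union> {{b, c}, {d, a}}" using e ab by auto
  then have "e = {d,a}" using tiling_uniq[OF T', of e "{d,a}" a] e by auto
  with e have daT: "{d,a} \<in> T" by simp
  obtain e2 where e2: "e2 \<in> T" "b \<in> e2" using tiling_cover[OF T R(2)] by blast
  have "e2 \<noteq> {c,d}" using e2 dist by auto
  then have "e2 \<in> (T - {{a, b}, {c, d}}) \<union> {{b, c}, {d, a}}" using e2 ab by auto
  then have "e2 = {b,c}" using tiling_uniq[OF T', of e2 "{b,c}" b] e2 by auto
  with e2 have bcT: "{b,c} \<in> T" by simp
  have "{c,d} \<notin> T"
  proof
    assume "{c,d} \<in> T"
    then have "{c,d} = {d,a}" using tiling_uniq[OF T _ daT, of "{c,d}" d] by auto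
    then show False using dist by (auto simp: doubleton_eq_iff)
  qed
  then show ?thesis using ab daT bcT by auto
qed



lemma step_ideal:
  assumes R: "cubiculated_region n R" and T: "T \<in> tilings n R" and M: "M \<in> flips n R"
    and T': "apply_move T M \<in> tilings n R"
  shows "ymon T - ymon (apply_move T M) \<in> (flip_ideal n R :: ('n::finite, 'k::field) dpoly set)"
proof -
  have finR: "finite R" using R by (simp add: cubiculated_region_def)
  have finT: "finite T" using tiling_finite[OF finR T] .
  obtain a b c d where f: "fl n R a b c d" and Meq: "M = ({{a, b}, {c, d}}, {{b, c}, {d, a}})"
    using M by (rule flipsE)
  define A where "A = {{a, b}, {c, d}}"
  define B where "B = {{b, c}, {d, a}}"
  have T'eq: "apply_move T M = (T - A) \<union> B" by (simp add: apply_move_def Meq A_def B_def)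
  show ?thesis
  proof (cases "{a,b} \<in> T \<and> {c,d} \<in> T")
    case True
    have AT: "A \<subseteq> T" using True by (auto simp: A_def)
    have disj: "(T - A) \<inter> B = {}" using flip_forward(2)[OF T f] True by (simp add: A_def B_def)
    have e1: "(ymon T :: ('n, 'k) dpoly) = ymon (T - A) * ymon A"
    proof -
      have "T = (T - A) \<union> A" using AT by auto
      then have "(ymon T :: ('n, 'k) dpoly) = ymon ((T - A) \<union> A)" by simp
      also have "\<dots> = ymon (T - A) * ymon A" by (rule ymon_union) (use finT in \<open>auto simp: A_def\<close>)
      finally show ?thesis .
    qed
    have e2: "(ymon ((T - A) \<union> B) :: ('n, 'k) dpoly) = ymon (T - A) * ymon B"
      by (rule ymon_union) (use finT disj in \<open>auto simp: B_def\<close>)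
    have eq: "ymon T - ymon (apply_move T M) = ymon (T - A) * ((ymon A - ymon B) :: ('n, 'k) dpoly)"
      unfolding T'eq e1 e2 by (simp add: right_diff_distrib)
    have rP: "ymon (T - A) \<in> (poly_ring n R :: ('n, 'k) dpoly set)"
      by (rule pr_ymon) (use finT tiling_sub[OF T] in auto)
    have "(ymon A - ymon B :: ('n, 'k) dpoly) = ymon (fst M) - ymon (snd M)"
      by (simp add: Meq A_def B_def)
    then have gG: "(ymon A - ymon B :: ('n, 'k) dpoly) \<in> {ymon (fst M) - ymon (snd M) | M. M \<in> flips n R}"
      using M by blast
    show ?thesis unfolding flip_ideal_def eq by (rule gi_gen[OF gG rP])
  next
    case False
    have "apply_move T M = T"
    proof (cases "{a,b} \<in> T")
      case False
      show ?thesis using flip_noop[OF T f _ False] T' by (simp add: T'eq A_def B_def)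
    next
      case True
      with \<open>\<not> ({a,b} \<in> T \<and> {c,d} \<in> T)\<close> have cd: "{c,d} \<notin> T" by simp
      have eq: "(T - A) \<union> B = (T - {{c, d}, {a, b}}) \<union> {{d, a}, {b, c}}"
        by (auto simp: A_def B_def)
      show ?thesis using flip_noop[OF T fl_rot2[OF f] _ cd] T' unfolding T'eq eq by simp
    qed
    then show ?thesis by (simp add: flip_ideal_def gi_zero)
  qed
qed

lemma path_ideal:
  assumes R: "cubiculated_region n R"
  shows "T \<in> tilings n R \<Longrightarrow> set Ms \<subseteq> flips n R \<Longrightarrow>
    (\<forall>s. 1 \<le> s \<and> s \<le> length Ms \<longrightarrow> apply_moves T (take s Ms) \<in> tilings n R) \<Longrightarrow>
    ymon T - ymon (apply_moves T Ms) \<in> (flip_ideal n R :: ('n::finite, 'k::field) dpoly set)"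
proof (induction Ms arbitrary: T)
  case Nil
  then show ?case by (simp add: apply_moves_def flip_ideal_def gi_zero)
next
  case (Cons M Ms)
  have T': "apply_move T M \<in> tilings n R"
    using Cons.prems(3)[rule_format, of 1] by (simp add: apply_moves_def)
  have "\<forall>s. 1 \<le> s \<and> s \<le> length Ms \<longrightarrow> apply_moves (apply_move T M) (take s Ms) \<in> tilings n R"
  proof (intro allI impI)
    fix s assume s: "1 \<le> s \<and> s \<le> length Ms"
    have "apply_moves T (take (Suc s) (M # Ms)) \<in> tilings n R"
      using Cons.prems(3)[rule_format, of "Suc s"] s by simp
    then show "apply_moves (apply_move T M) (take s Ms) \<in> tilings n R"
      by (simp add: apply_moves_def)
  qed
  then have IH: "ymon (apply_move T M) - ymon (apply_moves (apply_move T M) Ms) \<in> (flip_ideal n R :: ('n, 'k) dpoly set)"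
    using Cons.IH[OF T'] Cons.prems(2) by simp
  have st: "ymon T - ymon (apply_move T M) \<in> (flip_ideal n R :: ('n, 'k) dpoly set)"
    by (rule step_ideal[OF R Cons.prems(1) _ T']) (use Cons.prems(2) in simp)
  have "(ymon T - ymon (apply_moves T (M # Ms)) :: ('n, 'k) dpoly) =
     (ymon T - ymon (apply_move T M)) + (ymon (apply_move T M) - ymon (apply_moves (apply_move T M) Ms))"
    by (simp add: apply_moves_def)
  also have "\<dots> \<in> flip_ideal n R"
    unfolding flip_ideal_def by (rule gi_add[OF pr_add pr_zero]) (use st IH in \<open>auto simp: flip_ideal_def\<close>)
  finally show ?case .
qed

lemma forward:
  assumes R: "cubiculated_region n R" and fc: "flip_connected n R"
  shows "(tiling_ideal n R :: ('n::finite, 'k::field) dpoly set) \<subseteq> flip_ideal n R"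
  unfolding tiling_ideal_def flip_ideal_def
proof (rule gi_subset[OF pr_add pr_zero pr_mult])
  show "{ymon T1 - ymon T2 |T1 T2. T1 \<in> tilings n R \<and> T2 \<in> tilings n R}
    \<subseteq> (gen_ideal (poly_ring n R) {ymon (fst M) - ymon (snd M) |M. M \<in> flips n R} :: ('n, 'k) dpoly set)"
  proof clarify
    fix T1 T2 assume T: "T1 \<in> tilings n R" "T2 \<in> tilings n R"
    then obtain Ms where Ms: "set Ms \<subseteq> flips n R" "apply_moves T1 Ms = T2"
       "\<forall>s. 1 \<le> s \<and> s \<le> length Ms \<longrightarrow> apply_moves T1 (take s Ms) \<in> tilings n R"
      using fc unfolding flip_connected_def by blast
    show "(ymon T1 - ymon T2 :: ('n, 'k) dpoly) \<in> gen_ideal (poly_ring n R) {ymon (fst M) - ymon (snd M) |M. M \<in> flips n R}"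
      using path_ideal[OF R T(1) Ms(1) Ms(3)] Ms(2) by (simp add: flip_ideal_def)
  qed
qed


definition mrel :: "nat \<Rightarrow> 'n cube set \<Rightarrow> (('n cube set \<Rightarrow>\<^sub>0 nat) \<times> ('n cube set \<Rightarrow>\<^sub>0 nat)) set" where
  "mrel n R = {(u + expo A, u + expo B) | u A B. (A, B) \<in> flips n R}"

lemma flip_rev: "(A, B) \<in> flips n R \<Longrightarrow> (B, A) \<in> flips n R"
proof -
  assume "(A, B) \<in> flips n R"
  then obtain a b c d where f: "fl n R a b c d" and e: "(A, B) = ({{a, b}, {c, d}}, {{b, c}, {d, a}})"
    by (rule flipsE)
  have "({{b, c}, {d, a}}, {{c, d}, {a, b}}) \<in> flips n R" using flipsI[OF fl_rot[OF f]] .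
  then show ?thesis using e by (simp add: insert_commute)
qed

lemma path_step:
  assumes finR: "finite R" and S: "S \<in> tilings n R" and M: "(A, B) \<in> flips n R"
    and eq: "expo S = u + expo A"
  shows "(S - A) \<union> B \<in> tilings n R" "expo ((S - A) \<union> B) = u + expo B"
proof -
  obtain a b c d where f: "fl n R a b c d" and e: "A = {{a, b}, {c, d}}" "B = {{b, c}, {d, a}}"
    using M by (rule flipsE) auto
  have finS: "finite S" using tiling_finite[OF finR S] .
  have finA: "finite A" "finite B" using e by auto
  have lk: "Poly_Mapping.lookup u x + (if x \<in> A then 1 else 0) = (if x \<in> S then 1 else 0)" for x
    using arg_cong[OF eq, of "\<lambda>p. Poly_Mapping.lookup p x"] by (simp add: lookup_add lookup_expo finS finA)
  have AS: "A \<subseteq> S"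
  proof
    fix x assume "x \<in> A" then show "x \<in> S" using lk[of x] by (auto split: if_splits)
  qed
  then have ab: "{a,b} \<in> S" "{c,d} \<in> S" using e by auto
  show t: "(S - A) \<union> B \<in> tilings n R" using flip_forward(1)[OF S f ab] e by simp
  have disj: "(S - A) \<inter> B = {}" using flip_forward(2)[OF S f ab] e by simp
  have dist: "a \<noteq> b" "a \<noteq> c" "a \<noteq> d" "b \<noteq> c" "b \<noteq> d" "c \<noteq> d" using f by (auto simp: fl_def)
  have AB: "A \<inter> B = {}" using dist e by (auto simp: doubleton_eq_iff)
  show "expo ((S - A) \<union> B) = u + expo B"
  proof (rule poly_mapping_eqI)
    fix x
    have "Poly_Mapping.lookup u x = (if x \<in> S - A then 1 else 0)"
      using lk[of x] AS by (auto split: if_splits)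
    then show "Poly_Mapping.lookup (expo ((S - A) \<union> B)) x = Poly_Mapping.lookup (u + expo B) x"
      using disj AB finS finA by (auto simp: lookup_add lookup_expo)
  qed
qed

lemma path_exists:
  assumes finR: "finite R" and T1: "T1 \<in> tilings n R"
  shows "(expo T1, m) \<in> (mrel n R)\<^sup>* \<Longrightarrow> \<exists>S Ms. S \<in> tilings n R \<and> m = expo S \<and> set Ms \<subseteq> flips n R \<and>
     apply_moves T1 Ms = S \<and> (\<forall>s. 1 \<le> s \<and> s \<le> length Ms \<longrightarrow> apply_moves T1 (take s Ms) \<in> tilings n R)"
proof (induction rule: rtrancl_induct)
  case base
  then show ?case using T1 by (intro exI[of _ T1] exI[of _ "[]"]) (simp add: apply_moves_def)
next
  case (step m m')
  then obtain S Ms where IH: "S \<in> tilings n R" "m = expo S" "set Ms \<subseteq> flips n R"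
     "apply_moves T1 Ms = S" "\<forall>s. 1 \<le> s \<and> s \<le> length Ms \<longrightarrow> apply_moves T1 (take s Ms) \<in> tilings n R"
    by blast
  from step(2) obtain u A B where st: "m = u + expo A" "m' = u + expo B" "(A, B) \<in> flips n R"
    unfolding mrel_def by blast
  have ps: "(S - A) \<union> B \<in> tilings n R" "expo ((S - A) \<union> B) = u + expo B"
  proof -
    have "expo S = u + expo A" using IH(2) st(1) by simp
    then show "(S - A) \<union> B \<in> tilings n R" "expo ((S - A) \<union> B) = u + expo B"
      using path_step[OF finR IH(1) st(3)] by auto
  qed
  have am: "apply_moves T1 (Ms @ [(A, B)]) = (S - A) \<union> B"
    using IH(4) by (simp add: apply_moves_def apply_move_def)
  have "\<forall>s. 1 \<le> s \<and> s \<le> length (Ms @ [(A,B)]) \<longrightarrow> apply_moves T1 (take s (Ms @ [(A,B)])) \<in> tilings n R"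
  proof (intro allI impI)
    fix s assume s: "1 \<le> s \<and> s \<le> length (Ms @ [(A,B)])"
    show "apply_moves T1 (take s (Ms @ [(A,B)])) \<in> tilings n R"
    proof (cases "s \<le> length Ms")
      case True then show ?thesis using IH(5) s by simp
    next
      case False then have "s = length Ms + 1" using s by simp
      then show ?thesis using am ps by simp
    qed
  qed
  then show ?case using ps am IH(3) st(2) st(3)
    by (intro exI[of _ "(S - A) \<union> B"] exI[of _ "Ms @ [(A, B)]"]) auto
qed

lemma backward:
  assumes R: "cubiculated_region n R"
    and I: "(tiling_ideal n R :: ('n::finite, 'k::field) dpoly set) \<subseteq> flip_ideal n R"
  shows "flip_connected n R"
  unfolding flip_connected_def
proof (intro ballI)
  fix T1 T2 assume T1: "T1 \<in> tilings n R" and T2: "T2 \<in> tilings n R"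
  have finR: "finite R" using R by (simp add: cubiculated_region_def)
  define C where "C = {m. (expo T1, m) \<in> (mrel n R)\<^sup>*}"
  have Cclosed: "u + expo A \<in> C \<longleftrightarrow> u + expo B \<in> C" if "(A, B) \<in> flips n R" for u A B
  proof
    assume "u + expo A \<in> C"
    moreover have "(u + expo A, u + expo B) \<in> mrel n R" using that unfolding mrel_def by blast
    ultimately show "u + expo B \<in> C" unfolding C_def by (auto intro: rtrancl_into_rtrancl)
  next
    assume "u + expo B \<in> C"
    moreover have "(u + expo B, u + expo A) \<in> mrel n R" using flip_rev[OF that] unfolding mrel_def by blast
    ultimately show "u + expo A \<in> C" unfolding C_def by (auto intro: rtrancl_into_rtrancl)
  qed
  have "expo T2 \<in> C"
  proof (rule ccontr)
    assume nC: "expo T2 \<notin> C"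
    have T1C: "expo T1 \<in> C" unfolding C_def by simp
    have "(ymon T1 - ymon T2 :: ('n, 'k) dpoly) \<in> tiling_ideal n R"
    proof -
      have "(ymon T1 - ymon T2 :: ('n, 'k) dpoly) \<in> {ymon T1 - ymon T2 |T1 T2. T1 \<in> tilings n R \<and> T2 \<in> tilings n R}"
        using T1 T2 by blast
      from gi_gen[OF this pr_one] show ?thesis unfolding tiling_ideal_def by simp
    qed
    then have "(ymon T1 - ymon T2 :: ('n, 'k) dpoly) \<in> flip_ideal n R" using I by blast
    then obtain F r where F: "finite F" "F \<subseteq> {ymon (fst M) - ymon (snd M) |M. M \<in> flips n R}"
        "(ymon T1 - ymon T2 :: ('n, 'k) dpoly) = (\<Sum>g\<in>F. r g * g)"
      unfolding flip_ideal_def gen_ideal_def by blast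
    have "phi C (\<Sum>g\<in>F. r g * g) = (\<Sum>g\<in>F. phi C (r g * g))" by (rule phi_sum[OF F(1)])
    also have "\<dots> = 0"
    proof (rule sum.neutral, rule ballI)
      fix g assume "g \<in> F"
      then obtain A B where g: "g = ymon A - ymon B" "(A, B) \<in> flips n R" using F(2) by auto
      show "phi C (r g * g) = 0" unfolding g(1) ymon_expo
        by (rule phi_binom) (rule Cclosed[OF g(2)])
    qed
    finally have "phi C (ymon T1 - ymon T2 :: ('n, 'k) dpoly) = 0" using F(3) by simp
    then show False using T1C nC by (simp add: phi_diff ymon_expo phi_single)
  qed
  then obtain S Ms where P: "S \<in> tilings n R" "expo T2 = expo S" "set Ms \<subseteq> flips n R"
     "apply_moves T1 Ms = S" "\<forall>s. 1 \<le> s \<and> s \<le> length Ms \<longrightarrow> apply_moves T1 (take s Ms) \<in> tilings n R"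
    using path_exists[OF finR T1] unfolding C_def by blast
  have "S = T2" using expo_inj[OF tiling_finite[OF finR P(1)] tiling_finite[OF finR T2]] P(2) by simp
  then show "\<exists>Ms. set Ms \<subseteq> flips n R \<and> apply_moves T1 Ms = T2 \<and>
      (\<forall>s. 1 \<le> s \<and> s \<le> length Ms \<longrightarrow> apply_moves T1 (take s Ms) \<in> tilings n R)"
    using P by blast
qed

theorem mainTheorem6:
  fixes R :: "('n::finite) cube set" and n :: nat
  assumes "cubiculated_region n R"
  shows "flip_connected n R \<longleftrightarrow>
           (tiling_ideal n R :: ('n, 'k::field) dpoly set) \<subseteq> flip_ideal n R"
  using forward[OF assms] backward[OF assms] by blast

end
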